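(* Let $E$ be a finite set and $\tau:2^E\to 2^E$ any map. Then $(E,\tau)$ is uniquely generated if and only if for every $X\subseteq E$, every basis $B$ of $X$, and every $Y\subseteq E$ with $\tau(Y)=\tau(X)$, we have $B\subseteq Y$.
   Context: For $X\subseteq E$, a generator of $X$ is any $B\subseteq E$ with $\tau(B)=\tau(X)$ (not required to be a subset of $X$); a basis of $X$ is an inclusion-minimal generator of $X$. The space $(E,\tau)$ is uniquely generated if every $X\subseteq E$ has exactly one basis. *)

theory Defs
  imports Main
begin

text \<open>A closure-type space (E, tau) with tau : 2^E -> 2^E. Only the values of tau
on subsets of E matter.\<close>

definition generator :: "'a set \<Rightarrow> ('a set \<Rightarrow> 'a set) \<Rightarrow> 'a set \<Rightarrow> 'a set \<Rightarrow> bool" where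
  "generator E \<tau> X B \<longleftrightarrow> B \<subseteq> E \<and> \<tau> B = \<tau> X"

definition basis :: "'a set \<Rightarrow> ('a set \<Rightarrow> 'a set) \<Rightarrow> 'a set \<Rightarrow> 'a set \<Rightarrow> bool" where
  "basis E \<tau> X B \<longleftrightarrow> generator E \<tau> X B \<and> (\<forall>C. C \<subset> B \<longrightarrow> \<not> generator E \<tau> X C)"

definition uniquely_generated :: "'a set \<Rightarrow> ('a set \<Rightarrow> 'a set) \<Rightarrow> bool" where
  "uniquely_generated E \<tau> \<longleftrightarrow> (\<forall>X. X \<subseteq> E \<longrightarrow> (\<exists>!B. basis E \<tau> X B))"

end

theory Submission
  imports Defs
begin

lemma basis_below:
  assumes "finite Y" "generator E \<tau> X Y"
  shows "\<exists>B. B \<subseteq> Y \<and> basis E \<tau> X B"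
  using assms
proof (induction Y rule: finite_psubset_induct)
  case (psubset Y)
  show ?case
  proof (cases "basis E \<tau> X Y")
    case True then show ?thesis by blast
  next
    case False
    then obtain C where C: "C \<subset> Y" "generator E \<tau> X C"
      using psubset.prems unfolding basis_def by blast
    from psubset.IH[OF C(1) C(2)] C(1) show ?thesis by blast
  qed
qed

theorem mainTheorem6:
  fixes E :: "'a set" and \<tau> :: "'a set \<Rightarrow> 'a set"
  assumes "finite E"
    and "\<And>X. X \<subseteq> E \<Longrightarrow> \<tau> X \<subseteq> E"
  shows "uniquely_generated E \<tau> \<longleftrightarrow>
    (\<forall>X B Y. X \<subseteq> E \<longrightarrow> basis E \<tau> X B \<longrightarrow> Y \<subseteq> E \<longrightarrow> \<tau> Y = \<tau> X \<longrightarrow> B \<subseteq> Y)"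
proof
  assume U: "uniquely_generated E \<tau>"
  show "\<forall>X B Y. X \<subseteq> E \<longrightarrow> basis E \<tau> X B \<longrightarrow> Y \<subseteq> E \<longrightarrow> \<tau> Y = \<tau> X \<longrightarrow> B \<subseteq> Y"
  proof (intro allI impI)
    fix X B Y assume X: "X \<subseteq> E" and B: "basis E \<tau> X B" and Y: "Y \<subseteq> E" "\<tau> Y = \<tau> X"
    have fY: "finite Y" using Y(1) assms(1) by (rule finite_subset)
    have gY: "generator E \<tau> X Y" using Y unfolding generator_def by simp
    obtain B' where B': "B' \<subseteq> Y" "basis E \<tau> X B'" using basis_below[OF fY gY] by (elim exE conjE)
    have u: "\<exists>!B. basis E \<tau> X B" using U X unfolding uniquely_generated_def by simp
    have "B' = B" using u B'(2) B by (metis)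
    with \<open>B' \<subseteq> Y\<close> show "B \<subseteq> Y" by simp
  qed
next
  assume H: "\<forall>X B Y. X \<subseteq> E \<longrightarrow> basis E \<tau> X B \<longrightarrow> Y \<subseteq> E \<longrightarrow> \<tau> Y = \<tau> X \<longrightarrow> B \<subseteq> Y"
  show "uniquely_generated E \<tau>"
    unfolding uniquely_generated_def
  proof (intro allI impI)
    fix X assume X: "X \<subseteq> E"
    have fX: "finite X" using X assms(1) by (rule finite_subset)
    have gX: "generator E \<tau> X X" using X unfolding generator_def by simp
    obtain B where B: "basis E \<tau> X B" using basis_below[OF fX gX] by (elim exE conjE)
    have "B' = B" if B': "basis E \<tau> X B'" for B'
    proof -
      have g: "B \<subseteq> E" "\<tau> B = \<tau> X" "B' \<subseteq> E" "\<tau> B' = \<tau> X"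
        using B B' unfolding basis_def generator_def by auto
      have "B' \<subseteq> B" using H X B' g(1,2) by simp
      moreover have "B \<subseteq> B'" using H X B g(3,4) by simp
      ultimately show ?thesis by (rule subset_antisym)
    qed
    with B show "\<exists>!B. basis E \<tau> X B" by (intro ex1I)
  qed
qed

end
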